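(* Let $F$ be strictly convex and twice differentiable on an open convex domain $\mathcal{X}\subseteq\mathbb{R}^d$, with Bregman divergence $D_F$, and let $\mu\ge 1$. (i) If $D_F$ is $\mu$-similar then it is $2\mu$-admissible. (ii) If $D_F$ is $\mu$-admissible then it is directionally $\mu$-admissible. (iii) $D_F$ is $\mu$-asymmetric if and only if it is directionally $(1+\mu)$-admissible.
   Context: $D_F(q,p)=F(q)-F(p)-\langle\nabla F(p),q-p\rangle$. For a site $p\in\mathcal{X}$, let $f_p(x)=D_F(x,p)$ with derivatives taken in $x$. $D_F$ is $\tau$-admissible if for all $p,x\in\mathcal{X}$: $\|\nabla f_p(x)\|\,\|x-p\|\le\tau f_p(x)$ and $\|\nabla^2 f_p(x)\|\,\|x-p\|^2\le\tau^2 f_p(x)$ (Euclidean/spectral norms). $D_F$ is directionally $\tau$-admissible if for all $p,x\in\mathcal{X}$: $\langle\nabla f_p(x),x-p\rangle\le\tau f_p(x)$. $D_F$ is $\mu$-asymmetric if $D_F(q,p)\le\mu D_F(p,q)$ for all $p,q\in\mathcal{X}$. $D_F$ is $\mu$-similar if $\|q-p\|^2\le D_F(q,p)\le\mu\|q-p\|^2$ for all $p,q\in\mathcal{X}$. *)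

theory Defs
  imports "HOL-Analysis.Analysis"
begin

definition strictly_convex_on :: "'a::real_vector set \<Rightarrow> ('a \<Rightarrow> real) \<Rightarrow> bool" where
  "strictly_convex_on X F \<longleftrightarrow> convex X \<and>
     (\<forall>x\<in>X. \<forall>y\<in>X. x \<noteq> y \<longrightarrow> (\<forall>t::real. 0 < t \<and> t < 1 \<longrightarrow>
        F ((1 - t) *\<^sub>R x + t *\<^sub>R y) < (1 - t) * F x + t * F y))"

definition grad :: "('a::euclidean_space \<Rightarrow> real) \<Rightarrow> 'a \<Rightarrow> 'a" where
  "grad f x = (\<Sum>b\<in>Basis. frechet_derivative f (at x) b *\<^sub>R b)"

definition hess :: "('a::euclidean_space \<Rightarrow> real) \<Rightarrow> 'a \<Rightarrow> 'a \<Rightarrow> 'a" where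
  "hess f x = frechet_derivative (grad f) (at x)"

definition twice_differentiable_on :: "('a::euclidean_space \<Rightarrow> real) \<Rightarrow> 'a set \<Rightarrow> bool" where
  "twice_differentiable_on F X \<longleftrightarrow>
     (\<forall>x\<in>X. F differentiable (at x) \<and> grad F differentiable (at x))"

definition bregman :: "('a::euclidean_space \<Rightarrow> real) \<Rightarrow> 'a \<Rightarrow> 'a \<Rightarrow> real" where
  "bregman F q p = F q - F p - inner (grad F p) (q - p)"

definition fsite :: "('a::euclidean_space \<Rightarrow> real) \<Rightarrow> 'a \<Rightarrow> 'a \<Rightarrow> real" where
  "fsite F p = (\<lambda>x. bregman F x p)"

definition admissible :: "('a::euclidean_space \<Rightarrow> real) \<Rightarrow> 'a set \<Rightarrow> real \<Rightarrow> bool" where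
  "admissible F X \<tau> \<longleftrightarrow> (\<forall>p\<in>X. \<forall>x\<in>X.
     norm (grad (fsite F p) x) * norm (x - p) \<le> \<tau> * fsite F p x \<and>
     onorm (hess (fsite F p) x) * (norm (x - p))\<^sup>2 \<le> \<tau>\<^sup>2 * fsite F p x)"

definition dir_admissible :: "('a::euclidean_space \<Rightarrow> real) \<Rightarrow> 'a set \<Rightarrow> real \<Rightarrow> bool" where
  "dir_admissible F X \<tau> \<longleftrightarrow> (\<forall>p\<in>X. \<forall>x\<in>X.
     inner (grad (fsite F p) x) (x - p) \<le> \<tau> * fsite F p x)"

definition asymmetric :: "('a::euclidean_space \<Rightarrow> real) \<Rightarrow> 'a set \<Rightarrow> real \<Rightarrow> bool" where
  "asymmetric F X \<mu> \<longleftrightarrow> (\<forall>p\<in>X. \<forall>q\<in>X. bregman F q p \<le> \<mu> * bregman F p q)"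

definition similar :: "('a::euclidean_space \<Rightarrow> real) \<Rightarrow> 'a set \<Rightarrow> real \<Rightarrow> bool" where
  "similar F X \<mu> \<longleftrightarrow> (\<forall>p\<in>X. \<forall>q\<in>X.
     (norm (q - p))\<^sup>2 \<le> bregman F q p \<and> bregman F q p \<le> \<mu> * (norm (q - p))\<^sup>2)"

end

theory Submission
  imports Defs
begin

lemma grad_from_deriv:
  fixes f :: "'a::euclidean_space \<Rightarrow> real"
  assumes "(f has_derivative (\<lambda>h. inner v h)) (at x)"
  shows "grad f x = v"
proof -
  have "frechet_derivative f (at x) = (\<lambda>h. inner v h)"
    using frechet_derivative_at[OF assms] by simp
  then show ?thesis unfolding grad_def
    using euclidean_representation[of v] by (simp add: inner_commute)
qed

lemma deriv_grad:
  fixes f :: "'a::euclidean_space \<Rightarrow> real"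
  assumes "f differentiable (at x)"
  shows "(f has_derivative (\<lambda>h. inner (grad f x) h)) (at x)"
proof -
  let ?f' = "frechet_derivative f (at x)"
  have d: "(f has_derivative ?f') (at x)" using assms frechet_derivative_works by blast
  then have lin: "linear ?f'" using has_derivative_linear by blast
  have "?f' h = inner (grad f x) h" for h
  proof -
    have "?f' h = ?f' (\<Sum>b\<in>Basis. (h \<bullet> b) *\<^sub>R b)" using euclidean_representation[of h] by simp
    also have "\<dots> = (\<Sum>b\<in>Basis. (h \<bullet> b) * ?f' b)"
      using lin by (simp add: linear_sum linear_scale)
    also have "\<dots> = inner (grad f x) h"
      unfolding grad_def by (simp add: inner_sum_right inner_commute mult.commute)
    finally show ?thesis .
  qed
  then have "?f' = (\<lambda>h. inner (grad f x) h)" by blast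
  then show ?thesis using d by simp
qed

lemma three_point:
  "bregman F z x = bregman F z y + bregman F y x + inner (grad F y - grad F x) (z - y)"
  unfolding bregman_def by (simp add: inner_diff_left inner_diff_right algebra_simps)

lemma grad_fsite:
  fixes F :: "'a::euclidean_space \<Rightarrow> real"
  assumes "F differentiable (at x)"
  shows "grad (fsite F p) x = grad F x - grad F p"
proof -
  have "((\<lambda>y. F y - F p - inner (grad F p) (y - p)) has_derivative
        (\<lambda>h. inner (grad F x) h - 0 - inner (grad F p) (h - 0))) (at x)"
    by (intro derivative_intros deriv_grad assms)
  then have "(fsite F p has_derivative (\<lambda>h. inner (grad F x - grad F p) h)) (at x)"
    unfolding fsite_def bregman_def by (simp add: inner_diff_left)
  then show ?thesis by (rule grad_from_deriv)
qed

lemma lip_step: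
  fixes F :: "'a::euclidean_space \<Rightarrow> real"
  assumes sim: "similar F X \<mu>" and mu: "\<mu> > 0"
    and xX: "x \<in> X" and yX: "y \<in> X"
    and zX: "y - (1/(2*\<mu>)) *\<^sub>R (grad F y - grad F x) \<in> X"
  shows "norm (grad F y - grad F x) \<le> 2 * \<mu> * norm (y - x)"
proof -
  define \<Delta> where "\<Delta> = grad F y - grad F x"
  define z where "z = y - (1/(2*\<mu>)) *\<^sub>R \<Delta>"
  have zX': "z \<in> X" using zX unfolding z_def \<Delta>_def .
  have "0 \<le> (norm (z - x))\<^sup>2" by simp
  also have "\<dots> \<le> bregman F z x" using sim zX' xX unfolding similar_def by blast
  also have "\<dots> = bregman F z y + bregman F y x + inner \<Delta> (z - y)"
    unfolding \<Delta>_def by (rule three_point)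
  finally have 0: "0 \<le> bregman F z y + bregman F y x + inner \<Delta> (z - y)" .
  have 1: "bregman F z y \<le> \<mu> * (norm (z - y))\<^sup>2" using sim zX' yX unfolding similar_def by blast
  have 2: "bregman F y x \<le> \<mu> * (norm (y - x))\<^sup>2" using sim xX yX unfolding similar_def by blast
  have zy: "z - y = - ((1/(2*\<mu>)) *\<^sub>R \<Delta>)" unfolding z_def by simp
  have 3: "(norm (z - y))\<^sup>2 = (norm \<Delta>)\<^sup>2 / (4*\<mu>\<^sup>2)"
    using mu by (simp add: zy power2_eq_square field_simps)
  have 4: "inner \<Delta> (z - y) = - (norm \<Delta>)\<^sup>2 / (2*\<mu>)"
    using mu by (simp add: zy power2_norm_eq_inner)
  have "0 \<le> \<mu> * ((norm \<Delta>)\<^sup>2 / (4*\<mu>\<^sup>2)) + \<mu> * (norm (y - x))\<^sup>2 - (norm \<Delta>)\<^sup>2 / (2*\<mu>)"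
    using 0 1 2 3 4 by simp
  also have "\<mu> * ((norm \<Delta>)\<^sup>2 / (4*\<mu>\<^sup>2)) = (norm \<Delta>)\<^sup>2 / (4*\<mu>)"
    using mu by (simp add: power2_eq_square field_simps)
  finally have "(norm \<Delta>)\<^sup>2 / (4*\<mu>) \<le> \<mu> * (norm (y - x))\<^sup>2" by simp
  then have sq: "(norm \<Delta>)\<^sup>2 \<le> (2 * \<mu> * norm (y - x))\<^sup>2"
    using mu by (simp add: field_simps power2_eq_square)
  have nn: "0 \<le> 2 * \<mu> * norm (y - x)" using mu by simp
  have "norm \<Delta> \<le> 2 * \<mu> * norm (y - x)"
    using power2_le_imp_le[OF sq nn] .
  then show ?thesis unfolding \<Delta>_def .
qed


lemma local_lip:
  fixes F :: "'a::euclidean_space \<Rightarrow> real"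
  assumes sim: "similar F X \<mu>" and mu: "\<mu> > 0" and op: "open X" and xX: "x \<in> X"
    and cont: "isCont (grad F) x"
  shows "\<exists>d>0. \<forall>y. norm (y - x) < d \<longrightarrow> y \<in> X \<and>
           norm (grad F y - grad F x) \<le> 2 * \<mu> * norm (y - x)"
proof -
  obtain r where r: "r > 0" "ball x r \<subseteq> X" using op xX open_contains_ball by blast
  define h where "h y = y - (1/(2*\<mu>)) *\<^sub>R (grad F y - grad F x)" for y
  have hc: "isCont h x" unfolding h_def by (intro continuous_intros cont)
  have hx: "h x = x" unfolding h_def by simp
  obtain d1 where d1: "d1 > 0" "\<forall>y. dist y x < d1 \<longrightarrow> dist (h y) (h x) < r"
    using hc r(1) unfolding continuous_at_eps_delta by blast
  show ?thesis
  proof (intro exI[of _ "min r d1"] conjI allI impI)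
    show "min r d1 > 0" using r d1 by simp
    fix y assume y: "norm (y - x) < min r d1"
    have "y \<in> ball x r" using y by (simp add: dist_norm norm_minus_commute)
    then show yX: "y \<in> X" using r by blast
    have "dist (h y) x < r" using d1 y hx by (simp add: dist_norm)
    then have "h y \<in> ball x r" by (simp add: dist_commute)
    then have "h y \<in> X" using r by blast
    then show "norm (grad F y - grad F x) \<le> 2 * \<mu> * norm (y - x)"
      using lip_step[OF sim mu xX yX] unfolding h_def by blast
  qed
qed

lemma hess_bound:
  fixes F :: "'a::euclidean_space \<Rightarrow> real"
  assumes sim: "similar F X \<mu>" and mu: "\<mu> > 0" and op: "open X" and xX: "x \<in> X"
    and der: "(grad F has_derivative H) (at x)"
  shows "onorm H \<le> 2 * \<mu>"
proof -
  have cont: "isCont (grad F) x" using der has_derivative_continuous by blast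
  obtain d where d: "d > 0" "\<forall>y. norm (y - x) < d \<longrightarrow> y \<in> X \<and>
           norm (grad F y - grad F x) \<le> 2 * \<mu> * norm (y - x)"
    using local_lip[OF sim mu op xX cont] by blast
  have bl: "bounded_linear H" using der has_derivative_bounded_linear by blast
  have alt: "\<forall>e>0. \<exists>d>0. \<forall>y. norm (y - x) < d \<longrightarrow>
      norm (grad F y - grad F x - H (y - x)) \<le> e * norm (y - x)"
    using der unfolding has_derivative_at_alt by blast
  show ?thesis
  proof (rule onorm_le)
    fix v
    show "norm (H v) \<le> 2 * \<mu> * norm v"
    proof (cases "v = 0")
      case True
      then show ?thesis using bl by (simp add: linear_simps)
    next
      case False
      then have nv: "norm v > 0" by simp
      show ?thesis
      proof (rule field_le_epsilon)
        fix e :: real assume e: "0 < e"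
        obtain d' where d': "d' > 0" "\<forall>y. norm (y - x) < d' \<longrightarrow>
            norm (grad F y - grad F x - H (y - x)) \<le> (e / norm v) * norm (y - x)"
          using alt e nv by (meson divide_pos_pos)
        define t where "t = min d d' / (2 * norm v)"
        have t: "t > 0" unfolding t_def using d d' nv by simp
        define y where "y = x + t *\<^sub>R v"
        have nyx: "norm (y - x) = t * norm v" unfolding y_def using t by simp
        have tv: "t * norm v = min d d' / 2" unfolding t_def using nv by simp
        have lt1: "norm (y - x) < d" using nyx tv d d' by linarith
        have lt2: "norm (y - x) < d'" using nyx tv d d' by linarith
        have A: "norm (grad F y - grad F x) \<le> 2 * \<mu> * (t * norm v)"
        proof -
          have "norm (grad F y - grad F x) \<le> 2 * \<mu> * norm (y - x)" using d(2) lt1 by blast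
          then show ?thesis using nyx by simp
        qed
        have B: "norm (grad F y - grad F x - t *\<^sub>R H v) \<le> (e / norm v) * (t * norm v)"
        proof -
          have "norm (grad F y - grad F x - H (y - x)) \<le> (e / norm v) * norm (y - x)"
            using d'(2) lt2 by blast
          moreover have "H (y - x) = t *\<^sub>R H v" unfolding y_def
            by (simp add: linear_scale[OF bounded_linear.linear[OF bl]])
          ultimately show ?thesis using nyx by simp
        qed
        have "t * norm (H v) = norm (t *\<^sub>R H v)" using t by simp
        also have "\<dots> \<le> norm (grad F y - grad F x) + norm (grad F y - grad F x - t *\<^sub>R H v)"
          using norm_triangle_ineq4[of "grad F y - grad F x" "grad F y - grad F x - t *\<^sub>R H v"] by simp
        also have "\<dots> \<le> 2 * \<mu> * (t * norm v) + (e / norm v) * (t * norm v)"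
          using A B by linarith
        also have "\<dots> = t * (2 * \<mu> * norm v + e)" using nv by (simp add: field_simps)
        finally show "norm (H v) \<le> 2 * \<mu> * norm v + e" using t by simp
      qed
    qed
  qed
qed

theorem lemma8:
  fixes F :: "'a::euclidean_space \<Rightarrow> real" and X :: "'a set" and \<mu> :: real
  assumes "open X" and "convex X"
    and "strictly_convex_on X F"
    and "twice_differentiable_on F X"
    and "\<mu> \<ge> 1"
  shows "(similar F X \<mu> \<longrightarrow> admissible F X (2 * \<mu>))
       \<and> (admissible F X \<mu> \<longrightarrow> dir_admissible F X \<mu>)
       \<and> (asymmetric F X \<mu> \<longleftrightarrow> dir_admissible F X (1 + \<mu>))"
proof -
  have mu: "\<mu> > 0" using assms(5) by simp
  have Fd: "F differentiable (at x)" if "x \<in> X" for x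
    using assms(4) that unfolding twice_differentiable_on_def by blast
  have gd: "(grad F has_derivative hess F x) (at x)" if "x \<in> X" for x
    using assms(4) that unfolding twice_differentiable_on_def hess_def
    using frechet_derivative_works by blast
  have gf: "grad (fsite F p) x = grad F x - grad F p" if "x \<in> X" for x p
    using grad_fsite[OF Fd[OF that]] .
  have hf: "hess (fsite F p) x = hess F x" if "x \<in> X" for x p
  proof -
    have "((\<lambda>y. grad F y - grad F p) has_derivative (\<lambda>h. hess F x h - 0)) (at x)"
      by (intro derivative_intros gd that)
    then have "((\<lambda>y. grad F y - grad F p) has_derivative hess F x) (at x)" by simp
    then have "(grad (fsite F p) has_derivative hess F x) (at x)"
      by (rule has_derivative_transform_within_open[OF _ assms(1) that]) (simp add: gf)
    then show ?thesis unfolding hess_def using frechet_derivative_at by metis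
  qed
  have inner_id: "inner (grad (fsite F p) x) (x - p) = bregman F x p + bregman F p x"
    if "x \<in> X" for x p
    unfolding gf[OF that] bregman_def by (simp add: inner_diff_left inner_diff_right algebra_simps)
  have P1: "admissible F X (2 * \<mu>)" if sim: "similar F X \<mu>"
    unfolding admissible_def
  proof (intro ballI conjI)
    fix p x assume pX: "p \<in> X" and xX: "x \<in> X"
    have hb: "onorm (hess F z) \<le> 2 * \<mu>" if "z \<in> X" for z
      using hess_bound[OF sim mu assms(1) that gd[OF that]] .
    have gdw: "(grad F has_derivative hess F z) (at z within X)" if "z \<in> X" for z
      using gd[OF that] by (rule has_derivative_at_withinI)
    have lip: "norm (grad F x - grad F p) \<le> 2 * \<mu> * norm (x - p)"
      using differentiable_bound[OF assms(2) gdw hb xX pX] .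
    have sq: "(norm (x - p))\<^sup>2 \<le> bregman F x p" using sim xX pX unfolding similar_def by blast
    have fs: "fsite F p x = bregman F x p" unfolding fsite_def by simp
    have "norm (grad (fsite F p) x) * norm (x - p) \<le> 2 * \<mu> * norm (x - p) * norm (x - p)"
      unfolding gf[OF xX] using lip by (simp add: mult_right_mono)
    also have "\<dots> = 2 * \<mu> * (norm (x - p))\<^sup>2" by (simp add: power2_eq_square)
    also have "\<dots> \<le> 2 * \<mu> * fsite F p x" using sq fs mu by simp
    finally show "norm (grad (fsite F p) x) * norm (x - p) \<le> 2 * \<mu> * fsite F p x" .
    have o: "onorm (hess (fsite F p) x) \<le> (2 * \<mu>)\<^sup>2"
    proof -
      have "2 * \<mu> * 1 \<le> 2 * \<mu> * (2 * \<mu>)" using assms(5) by (intro mult_left_mono) auto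
      then have "2 * \<mu> \<le> (2 * \<mu>)\<^sup>2" by (simp add: power2_eq_square)
      then show ?thesis using hb[OF xX] hf[OF xX] by simp
    qed
    have "onorm (hess (fsite F p) x) * (norm (x - p))\<^sup>2 \<le> (2 * \<mu>)\<^sup>2 * (norm (x - p))\<^sup>2"
      using o by (simp add: mult_right_mono)
    also have "\<dots> \<le> (2 * \<mu>)\<^sup>2 * fsite F p x" using sq fs by (simp add: mult_left_mono)
    finally show "onorm (hess (fsite F p) x) * (norm (x - p))\<^sup>2 \<le> (2 * \<mu>)\<^sup>2 * fsite F p x" .
  qed
  have P2: "dir_admissible F X \<mu>" if adm: "admissible F X \<mu>"
    unfolding dir_admissible_def
  proof (intro ballI)
    fix p x assume "p \<in> X" "x \<in> X"
    then have "norm (grad (fsite F p) x) * norm (x - p) \<le> \<mu> * fsite F p x"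
      using adm unfolding admissible_def by blast
    then show "inner (grad (fsite F p) x) (x - p) \<le> \<mu> * fsite F p x"
      using norm_cauchy_schwarz order_trans by blast
  qed
  have P3: "asymmetric F X \<mu> \<longleftrightarrow> dir_admissible F X (1 + \<mu>)"
  proof
    assume a: "asymmetric F X \<mu>"
    show "dir_admissible F X (1 + \<mu>)" unfolding dir_admissible_def
    proof (intro ballI)
      fix p x assume pX: "p \<in> X" and xX: "x \<in> X"
      have "bregman F p x \<le> \<mu> * bregman F x p" using a pX xX unfolding asymmetric_def by blast
      moreover have "(1 + \<mu>) * fsite F p x = bregman F x p + \<mu> * bregman F x p"
        by (simp add: fsite_def algebra_simps)
      moreover note inner_id[OF xX, of p]
      ultimately show "inner (grad (fsite F p) x) (x - p) \<le> (1 + \<mu>) * fsite F p x"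
        by linarith
    qed
  next
    assume a: "dir_admissible F X (1 + \<mu>)"
    show "asymmetric F X \<mu>" unfolding asymmetric_def
    proof (intro ballI)
      fix p q assume pX: "p \<in> X" and qX: "q \<in> X"
      have "inner (grad (fsite F q) p) (p - q) \<le> (1 + \<mu>) * fsite F q p"
        using a pX qX unfolding dir_admissible_def by blast
      moreover have "(1 + \<mu>) * fsite F q p = bregman F p q + \<mu> * bregman F p q"
        by (simp add: fsite_def algebra_simps)
      moreover note inner_id[OF pX, of q]
      ultimately show "bregman F q p \<le> \<mu> * bregman F p q"
        by linarith
    qed
  qed
  show ?thesis using P1 P2 P3 by blast
qed

end
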